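(* Let $d\ge 0$ and $r\ge 2$ be integers, let $\langle\cdot,\cdot\rangle$ be any inner product on $\mathbb{R}[x]_{2d}$ with induced norm $\|\cdot\|$, and let $p\in\mathbb{R}[x]_{2d}$ be a univariate polynomial with $p(x)\ge 0$ for all $x\in\mathbb{R}$. Define $f_p:\mathbb{R}[x]_d^r\to\mathbb{R}$ by $f_p(u_1,\dots,u_r)=\big\|\sum_{i=1}^r u_i^2-p\big\|^2$. If $\mathbf{u}\in\mathbb{R}[x]_d^r$ satisfies $\nabla f_p(\mathbf{u})=0$ and $\nabla^2 f_p(\mathbf{u})\succeq 0$, then $f_p(\mathbf{u})=0$.
   Context: $\mathbb{R}[x]_d$ denotes the real vector space of univariate real polynomials of degree at most $d$; $\mathbb{R}[x]_d^r$ is the space of $r$-tuples of such polynomials, viewed as a finite-dimensional real vector space (e.g. via coefficients). Gradient and Hessian are taken with respect to this vector space structure: $\nabla f_p(\mathbf{u})=0$ means the directional derivative of $f_p$ at $\mathbf{u}$ vanishes in every direction $\mathbf{v}\in\mathbb{R}[x]_d^r$, and $\nabla^2 f_p(\mathbf{u})\succeq0$ means the second directional derivative $\frac{d^2}{d\epsilon^2}f_p(\mathbf{u}+\epsilon\mathbf{v})|_{\epsilon=0}$ is nonnegative for every $\mathbf{v}$. *)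

theory Defs
  imports "HOL-Analysis.Analysis" "HOL-Computational_Algebra.Polynomial"
begin

definition is_inner_product_on :: "nat \<Rightarrow> (real poly \<Rightarrow> real poly \<Rightarrow> real) \<Rightarrow> bool" where
  "is_inner_product_on n ip \<longleftrightarrow>
     (\<forall>a b. degree a \<le> n \<longrightarrow> degree b \<le> n \<longrightarrow> ip a b = ip b a) \<and>
     (\<forall>a b c. degree a \<le> n \<longrightarrow> degree b \<le> n \<longrightarrow> degree c \<le> n \<longrightarrow> ip (a + b) c = ip a c + ip b c) \<and>
     (\<forall>t a b. degree a \<le> n \<longrightarrow> degree b \<le> n \<longrightarrow> ip (smult t a) b = t * ip a b) \<and>
     (\<forall>a. degree a \<le> n \<longrightarrow> a \<noteq> 0 \<longrightarrow> ip a a > 0)"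

text \<open>f_p(u_1,...,u_r) = || sum_i u_i^2 - p ||^2, with tuples represented as functions on {..<r}.\<close>
definition fp :: "(real poly \<Rightarrow> real poly \<Rightarrow> real) \<Rightarrow> nat \<Rightarrow> real poly \<Rightarrow> (nat \<Rightarrow> real poly) \<Rightarrow> real" where
  "fp ip r p u = (let q = (\<Sum>i<r. (u i)^2) - p in ip q q)"

definition poly_tuples :: "nat \<Rightarrow> nat \<Rightarrow> (nat \<Rightarrow> real poly) set" where
  "poly_tuples d r = {u. \<forall>i<r. degree (u i) \<le> d}"

definition line_restr :: "((nat \<Rightarrow> real poly) \<Rightarrow> real) \<Rightarrow> (nat \<Rightarrow> real poly) \<Rightarrow> (nat \<Rightarrow> real poly) \<Rightarrow> real \<Rightarrow> real" where
  "line_restr f u v = (\<lambda>\<epsilon>. f (\<lambda>i. u i + smult \<epsilon> (v i)))"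

definition grad_zero :: "nat \<Rightarrow> nat \<Rightarrow> ((nat \<Rightarrow> real poly) \<Rightarrow> real) \<Rightarrow> (nat \<Rightarrow> real poly) \<Rightarrow> bool" where
  "grad_zero d r f u \<longleftrightarrow> (\<forall>v\<in>poly_tuples d r. (line_restr f u v has_real_derivative 0) (at 0))"

definition hess_psd :: "nat \<Rightarrow> nat \<Rightarrow> ((nat \<Rightarrow> real poly) \<Rightarrow> real) \<Rightarrow> (nat \<Rightarrow> real poly) \<Rightarrow> bool" where
  "hess_psd d r f u \<longleftrightarrow> (\<forall>v\<in>poly_tuples d r. deriv (deriv (line_restr f u v)) 0 \<ge> 0)"

end

theory Submission
  imports Defs "HOL-Computational_Algebra.Fundamental_Theorem_Algebra"
begin

lemma map_of_real_add: "map_poly (of_real::real\<Rightarrow>complex) (p + q) = map_poly of_real p + map_poly of_real q"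
  by (rule poly_eqI) (simp add: coeff_map_poly)

lemma map_of_real_mult: "map_poly (of_real::real\<Rightarrow>complex) (p * q) = map_poly of_real p * map_poly of_real q"
proof (induct p)
  case 0 then show ?case by simp
next
  case (pCons a p)
  have s: "map_poly (of_real::real\<Rightarrow>complex) (smult a q) = smult (of_real a) (map_poly of_real q)"
    by (rule poly_eqI) (simp add: coeff_map_poly)
  have c: "map_poly (of_real::real\<Rightarrow>complex) (pCons a p) = pCons (of_real a) (map_poly of_real p)"
    by (rule poly_eqI) (simp add: coeff_map_poly coeff_pCons split: nat.split)
  have c2: "map_poly (of_real::real\<Rightarrow>complex) (pCons 0 (p*q)) = pCons 0 (map_poly of_real (p*q))"
    by (rule poly_eqI) (simp add: coeff_map_poly coeff_pCons split: nat.split)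
  show ?case using pCons by (simp add: map_of_real_add s c c2)
qed

lemma poly_map_of_real: "poly (map_poly (of_real::real\<Rightarrow>complex) F) (of_real x) = of_real (poly F x)"
proof (induct F)
  case 0 then show ?case by simp
next
  case (pCons a p)
  have c: "map_poly (of_real::real\<Rightarrow>complex) (pCons a p) = pCons (of_real a) (map_poly of_real p)"
    by (rule poly_eqI) (simp add: coeff_map_poly coeff_pCons split: nat.split)
  show ?case using pCons by (simp add: c)
qed

lemma real_root_or_quad:
  fixes F :: "real poly"
  assumes "degree F > 0"
  shows "(\<exists>a. poly F a = 0) \<or> (\<exists>\<beta> \<gamma>. \<beta>^2 < 4*\<gamma> \<and> [:\<gamma>,\<beta>,1:] dvd F)"
proof -
  let ?M = "map_poly (of_real::real\<Rightarrow>complex)"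
  have "degree (?M F) > 0" using assms by (simp add: degree_map_poly)
  then have "\<not> constant (poly (?M F))" by (simp add: constant_degree)
  then obtain z where z: "poly (?M F) z = 0" using fundamental_theorem_of_algebra by blast
  show ?thesis
  proof (cases "Im z = 0")
    case True
    have "of_real (poly F (Re z)) = poly (?M F) (of_real (Re z))"
      by (simp add: poly_map_of_real)
    also have "complex_of_real (Re z) = z" using True by (simp add: complex_eq_iff)
    finally have "poly F (Re z) = 0" using z by simp
    then show ?thesis by blast
  next
    case False
    define \<beta> where "\<beta> = - 2 * Re z"
    define \<gamma> where "\<gamma> = Re z ^ 2 + Im z ^ 2"
    define G where "G = [:\<gamma>,\<beta>,1:]"
    have lt: "\<beta>^2 < 4*\<gamma>" using False by (simp add: \<beta>_def \<gamma>_def power2_eq_square) (meson not_real_square_gt_zero)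
    have Gz: "poly (?M G) z = 0"
      by (simp add: G_def \<beta>_def \<gamma>_def map_poly_pCons complex_eq_iff power2_eq_square algebra_simps)
    have dG: "degree G = 2" by (simp add: G_def)
    define t where "t = F mod G"
    have "F = G * (F div G) + t" by (simp add: t_def)
    then have "?M F = ?M G * ?M (F div G) + ?M t" by (metis map_of_real_add map_of_real_mult)
    then have tz: "poly (?M t) z = 0" using z Gz by simp
    have "t = 0 \<or> degree t < 2" using degree_mod_less[of G F] dG by (auto simp: t_def G_def)
    then have "degree t \<le> 1" by auto
    then have tt: "t = [:coeff t 0, coeff t 1:]"
      by (intro poly_eqI) (auto simp: coeff_pCons coeff_eq_0 split: nat.split)
    have "poly (?M [:coeff t 0, coeff t 1:]) z = of_real (coeff t 0) + of_real (coeff t 1) * z"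
      by (simp add: map_poly_pCons)
    with tz tt have e: "of_real (coeff t 0) + of_real (coeff t 1) * z = 0" by metis
    then have "coeff t 1 * Im z = 0" by (simp add: complex_eq_iff)
    then have "coeff t 1 = 0" using False by simp
    with e have "coeff t 0 = 0" by simp
    with tt \<open>coeff t 1 = 0\<close> have "t = 0" by simp
    then have "G dvd F" by (simp add: t_def mod_0_imp_dvd)
    then show ?thesis using lt G_def by blast
  qed
qed


lemma ideal_min_gen:
  fixes I :: "real poly set"
  assumes g0: "g0 \<in> I" "g0 \<noteq> 0"
    and sub: "\<And>a b. a \<in> I \<Longrightarrow> b \<in> I \<Longrightarrow> a - b \<in> I"
    and mul: "\<And>a c. a \<in> I \<Longrightarrow> a * c \<in> I"
  shows "\<exists>g\<in>I. g \<noteq> 0 \<and> (\<forall>a\<in>I. g dvd a)"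
proof -
  define P where "P n \<longleftrightarrow> (\<exists>g\<in>I. g \<noteq> 0 \<and> degree g = n)" for n
  have "P (degree g0)" using g0 by (auto simp: P_def)
  define m where "m = (LEAST n. P n)"
  have Pm: "P m" unfolding m_def by (rule LeastI) fact
  then obtain g where g: "g \<in> I" "g \<noteq> 0" "degree g = m" by (auto simp: P_def)
  have "g dvd a" if a: "a \<in> I" for a
  proof -
    have "a mod g = a - g * (a div g)" by (simp add: mod_eq_0_iff_dvd minus_div_mult_eq_mod [symmetric] mult.commute)
    then have mI: "a mod g \<in> I" using sub[OF a mul[OF g(1)]] by simp
    show ?thesis
    proof (rule ccontr)
      assume "\<not> g dvd a"
      then have nz: "a mod g \<noteq> 0" by (simp add: mod_eq_0_iff_dvd)
      then have "degree (a mod g) < m" using degree_mod_less[OF g(2), of a] g(3) by auto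
      moreover have "P (degree (a mod g))" using mI nz by (auto simp: P_def)
      then have "m \<le> degree (a mod g)" unfolding m_def by (rule Least_le)
      ultimately show False by simp
    qed
  qed
  then show ?thesis using g by blast
qed

lemma interp_exists:
  fixes S :: "real set" and f :: "real \<Rightarrow> real"
  assumes "finite S"
  shows "\<exists>t. \<forall>a\<in>S. poly t a = f a"
  using assms
proof (induct S rule: finite_induct)
  case empty then show ?case by simp
next
  case (insert b S)
  then obtain t where t: "\<forall>a\<in>S. poly t a = f a" by blast
  define PP where "PP = (\<Prod>a\<in>S. [:-a,1:])"
  have PPa: "poly PP a = 0" if "a \<in> S" for a
    using that insert(1) by (auto simp: PP_def poly_prod intro: prod_zero)
  have PPb: "poly PP b \<noteq> 0" using insert(1,2) by (auto simp: PP_def poly_prod prod_zero_iff)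
  define t' where "t' = t + smult ((f b - poly t b) / poly PP b) PP"
  have "\<forall>a\<in>insert b S. poly t' a = f a"
    using t PPa PPb by (auto simp: t'_def)
  then show ?case by blast
qed

lemma div_by_roots:
  fixes G q :: "real poly"
  assumes "G \<noteq> 0"
    and sqf: "\<And>a. \<not> [:-a,1:]^2 dvd G"
    and rt: "\<And>F. F dvd G \<Longrightarrow> degree F > 0 \<Longrightarrow> \<exists>a. poly F a = 0"
    and van: "\<And>a. poly G a = 0 \<Longrightarrow> poly q a = 0"
  shows "G dvd q"
  using assms
proof (induct "degree G" arbitrary: G q rule: less_induct)
  case less
  show ?case
  proof (cases "degree G = 0")
    case True
    with less(2) have "is_unit G" by (simp add: is_unit_iff_degree)
    then show ?thesis by (simp add: unit_imp_dvd)
  next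
    case False
    then obtain a where a: "poly G a = 0" using less(4)[of G] by auto
    then obtain G1 where G1: "G = [:-a,1:] * G1" by (metis poly_eq_0_iff_dvd dvd_def)
    have "poly q a = 0" using less(5) a by simp
    then obtain q1 where q1: "q = [:-a,1:] * q1" by (metis poly_eq_0_iff_dvd dvd_def)
    have G1nz: "G1 \<noteq> 0" using less(2) G1 by auto
    have dG1: "degree G1 < degree G"
    proof -
      have "degree G = degree [:-a,1:] + degree G1" unfolding G1 by (rule degree_mult_eq) (use G1nz in auto)
      then show ?thesis by simp
    qed
    have G1a: "poly G1 a \<noteq> 0"
    proof
      assume "poly G1 a = 0"
      then obtain G2 where "G1 = [:-a,1:] * G2" by (metis poly_eq_0_iff_dvd dvd_def)
      then have "G = [:-a,1:]^2 * G2" using G1 by (simp only: power2_eq_square mult.assoc)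
      then show False using less(3)[of a] by simp
    qed
    have G1G: "G1 dvd G" unfolding G1 by (rule dvd_triv_right)
    have "G1 dvd q1"
    proof (rule less(1)[OF dG1 G1nz])
      show "\<not> [:-b,1:]^2 dvd G1" for b
        using less(3)[of b] G1G dvd_trans by blast
      show "\<exists>b. poly F b = 0" if "F dvd G1" "degree F > 0" for F
        using less(4)[of F] that G1G dvd_trans by blast
      show "poly q1 b = 0" if "poly G1 b = 0" for b
      proof -
        have "poly G b = 0" using that G1 by simp
        then have "poly q b = 0" using less(5) by simp
        moreover have "b \<noteq> a" using that G1a by auto
        ultimately show ?thesis using q1 by simp
      qed
    qed
    then show ?thesis unfolding G1 q1 by (rule mult_dvd_mono[OF dvd_refl])
  qed
qed


lemma sum_list_sq_mult: "(\<Sum>h\<leftarrow>hs. (A * h)^2) = A^2 * (\<Sum>h\<leftarrow>hs. h^2)" for A :: "real poly"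
  by (induct hs) (simp_all add: algebra_simps power_mult_distrib)

lemma deg_mult_1: "degree (A::real poly) \<le> 1 \<Longrightarrow> degree h \<le> d - 1 \<Longrightarrow> d \<ge> 1 \<Longrightarrow> degree (A * h) \<le> d"
  using degree_mult_le[of A h] by linarith

lemma nonneg_at_limit:
  fixes f :: "real poly"
  assumes "\<And>x. x \<noteq> a \<Longrightarrow> poly f x \<ge> 0"
  shows "poly f a \<ge> 0"
proof (rule ccontr)
  assume neg: "\<not> poly f a \<ge> 0"
  have "(\<lambda>x. poly f x) \<midarrow>a\<rightarrow> poly f a" using poly_isCont[where p=f and x=a] by (simp add: isCont_def)
  then obtain s where s: "s > 0" "\<And>x. x \<noteq> a \<Longrightarrow> norm (x - a) < s \<Longrightarrow> norm (poly f x - poly f a) < - poly f a"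
    using neg unfolding LIM_eq by (metis neg_0_less_iff_less not_le)
  have "norm (poly f (a + s/2) - poly f a) < - poly f a" using s by auto
  moreover have "poly f (a + s/2) \<ge> 0" using assms[of "a + s/2"] s by auto
  ultimately show False by auto
qed

lemma sos_univ:
  fixes p :: "real poly"
  assumes "\<forall>x. poly p x \<ge> 0" "degree p \<le> 2*d"
  shows "\<exists>hs. (\<forall>h\<in>set hs. degree h \<le> d) \<and> p = (\<Sum>h\<leftarrow>hs. h^2)"
  using assms
proof (induct "degree p" arbitrary: p d rule: less_induct)
  case less
  show ?case
  proof (cases "degree p = 0")
    case True
    define c where "c = coeff p 0"
    have pc: "p = [:c:]" unfolding c_def using True
      by (intro poly_eqI) (auto simp: coeff_pCons coeff_eq_0 split: nat.split)
    have "c \<ge> 0" using less(2) pc by (metis poly_const_conv)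
    then have "p = [:sqrt c:]^2" using pc by (simp add: power2_eq_square)
    then show ?thesis by (intro exI[of _ "[[:sqrt c:]]"]) simp
  next
    case False
    then have pnz: "p \<noteq> 0" by auto
    from real_root_or_quad[of p] False
    consider (r) a where "poly p a = 0" | (q) \<beta> \<gamma> where "\<beta>^2 < 4*\<gamma>" "[:\<gamma>,\<beta>,1:] dvd p" by auto
    then show ?thesis
    proof cases
      case q
      then obtain s where ps: "p = [:\<gamma>,\<beta>,1:] * s" by (auto simp: dvd_def)
      have snz: "s \<noteq> 0" using pnz ps by auto
      have dp: "degree p = 2 + degree s" unfolding ps by (subst degree_mult_eq) (use snz in auto)
      define c where "c = sqrt (\<gamma> - \<beta>^2/4)"
      have Geq: "[:\<gamma>,\<beta>,1:] = [:\<beta>/2,1:]^2 + [:c:]^2"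
        using q(1) by (simp add: c_def power2_eq_square algebra_simps)
      have Gpos: "poly [:\<gamma>,\<beta>,1:] x > 0" for x
      proof -
        have "poly [:\<gamma>,\<beta>,1:] x = (x + \<beta>/2)^2 + (\<gamma> - \<beta>^2/4)" by (simp add: power2_eq_square algebra_simps)
        moreover have "\<gamma> - \<beta>^2/4 > 0" using q(1) by simp
        ultimately show ?thesis by (smt (verit) zero_le_power2)
      qed
      have sn: "\<forall>x. poly s x \<ge> 0"
      proof
        fix x
        have "poly p x = poly [:\<gamma>,\<beta>,1:] x * poly s x" using ps by (simp add: algebra_simps)
        then show "poly s x \<ge> 0" using less(2) Gpos[of x] by (metis zero_le_mult_iff not_le order_less_asym)
      qed
      have "degree s \<le> 2 * (d - 1)" using less(3) dp by simp
      then obtain hs where hs: "\<forall>h\<in>set hs. degree h \<le> d - 1" "s = (\<Sum>h\<leftarrow>hs. h^2)"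
        using less(1)[of s "d - 1"] dp sn by auto
      define hs' where "hs' = map (\<lambda>h. [:\<beta>/2,1:] * h) hs @ map (\<lambda>h. [:c:] * h) hs"
      have "(\<Sum>h\<leftarrow>hs'. h^2) = (\<Sum>h\<leftarrow>hs. ([:\<beta>/2,1:]*h)^2) + (\<Sum>h\<leftarrow>hs. ([:c:]*h)^2)"
        by (simp only: hs'_def map_append sum_list_append map_map o_def)
      also have "\<dots> = p" unfolding sum_list_sq_mult ps Geq hs(2) by (simp add: algebra_simps)
      finally have "p = (\<Sum>h\<leftarrow>hs'. h^2)" ..
      moreover have "\<forall>h\<in>set hs'. degree h \<le> d"
      proof
        fix h assume "h \<in> set hs'"
        then obtain h0 where h0: "h0 \<in> set hs" "h = [:\<beta>/2,1:] * h0 \<or> h = [:c:] * h0" by (auto simp: hs'_def)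
        have "d \<ge> 1" using less(3) dp by simp
        then show "degree h \<le> d" using h0 hs(1)
          by (elim disjE) (simp only:, rule deg_mult_1, simp_all, fastforce)+
      qed
      ultimately show ?thesis by blast
    next
      case r
      then obtain p1 where p1: "p = [:-a,1:] * p1" by (metis poly_eq_0_iff_dvd dvd_def)
      have "poly (pderiv p) a = 0"
      proof -
        have D: "DERIV (poly p) a :> poly (pderiv p) a" using poly_DERIV[of p a] by simp
        have "\<forall>y. \<bar>a - y\<bar> < 1 \<longrightarrow> poly p a \<le> poly p y" using less(2) r by simp
        then show ?thesis using DERIV_local_min[OF D, of 1] by simp
      qed
      moreover have "pderiv p = [:-a,1:] * pderiv p1 + p1" unfolding p1 pderiv_mult by (simp add: pderiv_pCons)
      ultimately have "poly p1 a = 0" by simp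
      then obtain p2 where p2: "p1 = [:-a,1:] * p2" by (metis poly_eq_0_iff_dvd dvd_def)
      have pp2: "p = [:-a,1:]^2 * p2" using p1 p2 by (simp only: power2_eq_square mult.assoc)
      have p2nz: "p2 \<noteq> 0" using pnz pp2 by auto
      have dp: "degree p = 2 + degree p2" unfolding pp2 by (subst degree_mult_eq) (use p2nz in \<open>auto simp: degree_power_eq\<close>)
      have sn: "\<forall>x. poly p2 x \<ge> 0"
      proof -
        have "poly p2 x \<ge> 0" if "x \<noteq> a" for x
        proof -
          have "poly p x = (x - a)^2 * poly p2 x" using pp2 by simp
          moreover have "(x - a)^2 > 0" using that by simp
          ultimately show ?thesis using less(2) by (metis zero_le_mult_iff not_le order_less_asym)
        qed
        then show ?thesis using nonneg_at_limit[of a p2] by metis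
      qed
      have "degree p2 \<le> 2 * (d - 1)" using less(3) dp by simp
      then obtain hs where hs: "\<forall>h\<in>set hs. degree h \<le> d - 1" "p2 = (\<Sum>h\<leftarrow>hs. h^2)"
        using less(1)[of p2 "d - 1"] dp sn by auto
      define hs' where "hs' = map (\<lambda>h. [:-a,1:] * h) hs"
      have "(\<Sum>h\<leftarrow>hs'. h^2) = (\<Sum>h\<leftarrow>hs. ([:-a,1:]*h)^2)"
        by (simp only: hs'_def map_map o_def)
      also have "\<dots> = p" unfolding sum_list_sq_mult pp2 hs(2) by simp
      finally have "p = (\<Sum>h\<leftarrow>hs'. h^2)" ..
      moreover have "\<forall>h\<in>set hs'. degree h \<le> d"
      proof
        fix h assume "h \<in> set hs'"
        then obtain h0 where h0: "h0 \<in> set hs" "h = [:-a,1:] * h0" by (auto simp: hs'_def)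
        have "d \<ge> 1" using less(3) dp by simp
        then show "degree h \<le> d" using h0 hs(1) by (simp only:, intro deg_mult_1) auto
      qed
      ultimately show ?thesis by blast
    qed
  qed
qed


lemma polyeqI: "(\<And>x. poly p x = poly q x) \<Longrightarrow> p = (q::real poly)"
  using poly_eq_poly_eq_iff by blast

lemma quad_nonneg:
  fixes A B Cc :: real
  assumes "\<And>l. A + 2*l*B + l^2*Cc \<ge> 0"
  shows "Cc \<ge> 0" "Cc = 0 \<Longrightarrow> B = 0"
proof -
  show "Cc \<ge> 0"
  proof (rule ccontr)
    assume "\<not> Cc \<ge> 0"
    then have c: "Cc < 0" by simp
    define l where "l = (\<bar>A\<bar> + 2*\<bar>B\<bar> + 1) / (- Cc) + 1"
    have "(\<bar>A\<bar> + 2*\<bar>B\<bar> + 1) / (- Cc) \<ge> 0" by (rule divide_nonneg_pos) (use c in auto)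
    then have l1: "l \<ge> 1" by (simp add: l_def)
    have "l * (- Cc) \<ge> \<bar>A\<bar> + 2*\<bar>B\<bar> + 1" using c by (simp add: l_def field_simps)
    then have "l * (l * (- Cc)) \<ge> l * (\<bar>A\<bar> + 2*\<bar>B\<bar> + 1)" using l1 by (intro mult_left_mono) auto
    moreover have "l * (\<bar>A\<bar> + 2*\<bar>B\<bar> + 1) \<ge> \<bar>A\<bar> + 2*l*\<bar>B\<bar> + 1"
      using l1 by (simp add: algebra_simps) (smt (verit) mult_le_cancel_right1 abs_ge_zero mult_nonneg_nonneg)
    moreover have "A + 2*l*B \<le> \<bar>A\<bar> + 2*l*\<bar>B\<bar>" using l1
      by (smt (verit) abs_ge_self abs_mult abs_of_nonneg mult_left_mono)
    moreover have "l^2 * Cc = - (l * (l * (- Cc)))" by (simp add: power2_eq_square)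
    ultimately have "A + 2*l*B + l^2*Cc < 0" by linarith
    with assms[of l] show False by simp
  qed
  show "B = 0" if "Cc = 0"
  proof (rule ccontr)
    assume "B \<noteq> 0"
    have "A + 2 * (-(\<bar>A\<bar>+1)/(2*B)) * B + (-(\<bar>A\<bar>+1)/(2*B))^2 * Cc = A - (\<bar>A\<bar>+1)"
      using \<open>B \<noteq> 0\<close> that by (simp add: field_simps)
    then show False using assms[of "-(\<bar>A\<bar>+1)/(2*B)"] by linarith
  qed
qed

lemma alg_core:
  fixes d :: nat and ell C :: "real poly \<Rightarrow> real" and u1 u2 p :: "real poly"
  assumes add: "\<And>a b. degree a \<le> 2*d \<Longrightarrow> degree b \<le> 2*d \<Longrightarrow> ell (a + b) = ell a + ell b"
    and smul: "\<And>c a. degree a \<le> 2*d \<Longrightarrow> ell (smult c a) = c * ell a"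
    and du1: "degree u1 = d" and u1nz: "u1 \<noteq> 0" and du2: "degree u2 \<le> d"
    and F1: "\<And>X. degree X \<le> d \<Longrightarrow> ell (u1 * X) = 0"
    and F2: "\<And>X. degree X \<le> d \<Longrightarrow> ell (u2 * X) = 0"
    and S: "\<And>a b. degree a \<le> d \<Longrightarrow> degree b \<le> d \<Longrightarrow> C (u1 * a + u2 * b) + ell (a^2 + b^2) \<ge> 0"
    and pn: "\<And>x. poly p x \<ge> 0" and dp: "degree p \<le> 2*d"
  shows "ell p \<ge> 0"
proof -
  have ell0: "ell 0 = 0" using smul[of 0 0] by simp
  have ell_diff: "ell (a - b) = ell a - ell b" if "degree a \<le> 2*d" "degree b \<le> 2*d" for a b
  proof -
    have "ell (a - b) = ell (a + smult (-1) b)" by simp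
    also have "\<dots> = ell a + ell (smult (-1) b)" using that by (intro add) (auto simp: degree_smult_le)
    also have "\<dots> = ell a - ell b" using smul[OF that(2), of "-1"] by simp
    finally show ?thesis .
  qed
  have dmul: "degree (a * b) \<le> 2*d" if "degree a \<le> d" "degree b \<le> d" for a b :: "real poly"
    using degree_mult_le[of a b] that by linarith
  define L where "L P = ell (P mod u1)" for P
  have dmod: "P mod u1 = 0 \<or> degree (P mod u1) < d" for P using degree_mod_less[OF u1nz, of P] du1 by auto
  have dmod2: "degree (P mod u1) \<le> 2*d" for P using dmod[of P] by auto
  have L_add: "L (P + Q) = L P + L Q" for P Q
    unfolding L_def poly_mod_add_left by (rule add[OF dmod2 dmod2])
  have L_smult: "L (smult c P) = c * L P" for c P
    unfolding L_def mod_smult_left by (rule smul[OF dmod2])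
  have L_diff: "L (P - Q) = L P - L Q" for P Q
    using L_add[of P "smult (-1) Q"] L_smult[of "-1" Q] by simp
  have L_dvd_u1: "L (u1 * X) = 0" for X by (simp add: L_def ell0)
  have L_ell: "L P = ell P" if dP: "degree P \<le> 2*d" for P
  proof -
    have e: "P = u1 * (P div u1) + P mod u1" by simp
    have dq: "degree (P div u1) \<le> d"
    proof (cases "P div u1 = 0")
      case True then show ?thesis by simp
    next
      case False
      have "degree (u1 * (P div u1)) = d + degree (P div u1)" using False u1nz du1 by (simp add: degree_mult_eq)
      moreover have "u1 * (P div u1) = P - P mod u1" by (simp add: minus_mod_eq_mult_div)
      moreover have "degree (P - P mod u1) \<le> 2*d" using dP dmod2[of P] by (meson degree_diff_le)
      ultimately have "d + degree (P div u1) \<le> 2*d" by simp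
      then show ?thesis by linarith
    qed
    have "ell P = ell (u1 * (P div u1)) + ell (P mod u1)"
      by (subst e, rule add) (use dmul[OF du1[THEN eq_imp_le] dq] dmod2 in auto)
    then show ?thesis using F1[OF dq] by (simp add: L_def)
  qed
  have L_u2: "L (u2 * X) = 0" for X
  proof -
    have "L (u2 * X) = L (u2 * (X mod u1))" unfolding L_def by (simp add: mod_mult_right_eq)
    also have "\<dots> = ell (u2 * (X mod u1))"
    proof (rule L_ell)
      have "degree (X mod u1) \<le> d" using dmod[of X] by auto
      then show "degree (u2 * (X mod u1)) \<le> 2*d" using dmul du2 by blast
    qed
    also have "\<dots> = 0" using dmod[of X] by (intro F2) auto
    finally show ?thesis .
  qed
  define I0 where "I0 = {A * u1 + B * u2 | A B. True}"
  have "\<exists>g\<in>I0. g \<noteq> 0 \<and> (\<forall>a\<in>I0. g dvd a)"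
  proof (rule ideal_min_gen[of u1])
    show "u1 \<in> I0" unfolding I0_def by (rule CollectI, rule exI[of _ 1], rule exI[of _ 0]) simp
    show "a - b \<in> I0" if "a \<in> I0" "b \<in> I0" for a b
      using that unfolding I0_def by clarify (rule_tac x="A - Aa" in exI, rule_tac x="B - Ba" in exI, simp add: algebra_simps)
    show "a * c \<in> I0" if "a \<in> I0" for a c
      using that unfolding I0_def by clarify (rule_tac x="A * c" in exI, rule_tac x="B * c" in exI, simp add: algebra_simps)
  qed (rule u1nz)
  then obtain g where g: "g \<in> I0" "g \<noteq> 0" "\<And>a. a \<in> I0 \<Longrightarrow> g dvd a" by blast
  obtain A0 B0 where AB: "g = A0 * u1 + B0 * u2" using g(1) unfolding I0_def by blast
  have "u1 \<in> I0" unfolding I0_def by (rule CollectI, rule exI[of _ 1], rule exI[of _ 0]) simp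
  moreover have "u2 \<in> I0" unfolding I0_def by (rule CollectI, rule exI[of _ 0], rule exI[of _ 1]) simp
  ultimately have gu1: "g dvd u1" and gu2: "g dvd u2" using g(3) by auto
  define w1 where "w1 = u1 div g"
  define w2 where "w2 = u2 div g"
  have u1w: "u1 = g * w1" using gu1 by (simp add: w1_def)
  have u2w: "u2 = g * w2" using gu2 by (simp add: w2_def)
  have bez: "A0 * w1 + B0 * w2 = 1"
  proof -
    have "g * (A0 * w1 + B0 * w2) = g * 1" using AB u1w u2w by (simp add: algebra_simps)
    then show ?thesis using g(2) by simp
  qed
  have w1nz: "w1 \<noteq> 0" using u1nz u1w by auto
  have dgw1: "degree g + degree w1 = d" using du1 u1w w1nz g(2) by (simp add: degree_mult_eq)
  have dgw2: "degree g + degree w2 \<le> d"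
  proof (cases "w2 = 0")
    case True then show ?thesis using dgw1 by simp
  next
    case False then show ?thesis using du2 u2w g(2) by (simp add: degree_mult_eq)
  qed
  have L_g: "L (g * X) = 0" for X
  proof -
    have "g * X = u1 * (A0 * X) + u2 * (B0 * X)" using AB by (simp add: algebra_simps)
    then show ?thesis using L_add L_dvd_u1 L_u2 by simp
  qed
  have L_modg: "L P = L Q" if "P = Q + g * R" for P Q R using that L_add L_g by simp
  have dwt: "degree (w * (t mod g)) \<le> d" if "degree g + degree w \<le> d" for w t
  proof (cases "t mod g = 0")
    case True then show ?thesis by simp
  next
    case False
    then have "degree (t mod g) < degree g" using degree_mod_less[OF g(2), of t] by auto
    then show ?thesis using degree_mult_le[of w "t mod g"] that by linarith
  qed
  have dmodg: "degree (t mod g) \<le> d" for t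
    using dwt[of 1 t] dgw1 by simp
  define \<sigma> where "\<sigma> = w1^2 + w2^2"
  have S2: "C (u1 * a0 + u2 * b0) + ell (a0^2 + b0^2) + 2 * l * ell (a0 * k1 + b0 * k2) + l^2 * ell (k1^2 + k2^2) \<ge> 0"
    if "degree a0 \<le> d" "degree b0 \<le> d" "degree k1 \<le> d" "degree k2 \<le> d" "u1 * k1 + u2 * k2 = 0" for a0 b0 k1 k2 l
  proof -
    have "C (u1 * (a0 + smult l k1) + u2 * (b0 + smult l k2)) + ell ((a0 + smult l k1)^2 + (b0 + smult l k2)^2) \<ge> 0"
      using that by (intro S) (auto intro: order.trans[OF degree_add_le] order.trans[OF degree_smult_le])
    moreover have "u1 * (a0 + smult l k1) + u2 * (b0 + smult l k2) = u1 * a0 + u2 * b0 + smult l (u1 * k1 + u2 * k2)"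
      by (simp add: algebra_simps smult_add_right)
    moreover have "(a0 + smult l k1)^2 + (b0 + smult l k2)^2 = (a0^2 + b0^2) + smult (2*l) (a0 * k1 + b0 * k2) + smult (l^2) (k1^2 + k2^2)"
      by (rule polyeqI) (simp add: power2_eq_square algebra_simps)
    moreover have "ell ((a0^2 + b0^2) + smult (2*l) (a0 * k1 + b0 * k2) + smult (l^2) (k1^2 + k2^2))
        = ell (a0^2 + b0^2) + 2 * l * ell (a0 * k1 + b0 * k2) + l^2 * ell (k1^2 + k2^2)"
    proof -
      have d1: "degree (a0^2 + b0^2) \<le> 2*d" using dmul[of a0 a0] dmul[of b0 b0] that
        by (simp add: power2_eq_square degree_add_le)
      have d2: "degree (a0 * k1 + b0 * k2) \<le> 2*d" using dmul[of a0 k1] dmul[of b0 k2] that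
        by (simp add: degree_add_le)
      have d3: "degree (k1^2 + k2^2) \<le> 2*d" using dmul[of k1 k1] dmul[of k2 k2] that
        by (simp add: power2_eq_square degree_add_le)
      show ?thesis
        using d1 d2 d3 by (simp add: add smul degree_add_le degree_smult_le order.trans[OF degree_smult_le] order.trans[OF degree_add_le])
    qed
    ultimately show ?thesis using that(5) by (simp add: add.assoc)
  qed
  have ker: "u1 * (w2 * t) + u2 * (- (w1 * t)) = 0" for t using u1w u2w by (simp add: algebra_simps)
  have dk1: "degree (w2 * (t mod g)) \<le> d" for t using dwt dgw2 by blast
  have dk2: "degree (- (w1 * (t mod g))) \<le> d" for t using dwt dgw1 by simp
  have ksq: "(w2 * t)^2 + (- (w1 * t))^2 = \<sigma> * t^2" for t by (simp add: \<sigma>_def power2_eq_square algebra_simps)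
  have quadK: "ell (\<sigma> * (t mod g)^2) \<ge> 0 \<and> (ell (\<sigma> * (t mod g)^2) = 0 \<longrightarrow>
      (\<forall>a0 b0. degree a0 \<le> d \<longrightarrow> degree b0 \<le> d \<longrightarrow> ell (a0 * (w2 * (t mod g)) + b0 * (- (w1 * (t mod g)))) = 0))" for t
  proof -
    have H: "\<And>a0 b0. degree a0 \<le> d \<Longrightarrow> degree b0 \<le> d \<Longrightarrow> (\<forall>l. C (u1 * a0 + u2 * b0) + ell (a0^2 + b0^2) + 2 * l * ell (a0 * (w2 * (t mod g)) + b0 * (- (w1 * (t mod g))))
        + l^2 * ell (\<sigma> * (t mod g)^2) \<ge> 0)"
    proof (intro allI)
      fix a0 b0 :: "real poly" and l :: real assume a: "degree a0 \<le> d" "degree b0 \<le> d"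
      have "C (u1 * a0 + u2 * b0) + ell (a0^2 + b0^2) + 2 * l * ell (a0 * (w2 * (t mod g)) + b0 * (- (w1 * (t mod g))))
        + l^2 * ell ((w2 * (t mod g))^2 + (- (w1 * (t mod g)))^2) \<ge> 0"
        by (rule S2[OF a dk1 dk2 ker])
      then show "C (u1 * a0 + u2 * b0) + ell (a0^2 + b0^2) + 2 * l * ell (a0 * (w2 * (t mod g)) + b0 * (- (w1 * (t mod g))))
        + l^2 * ell (\<sigma> * (t mod g)^2) \<ge> 0" by (simp only: ksq)
    qed
    have "ell (\<sigma> * (t mod g)^2) \<ge> 0" using quad_nonneg(1)[OF H[of 0 0, rule_format]] by simp
    moreover have "ell (a0 * (w2 * (t mod g)) + b0 * (- (w1 * (t mod g)))) = 0"
      if "ell (\<sigma> * (t mod g)^2) = 0" "degree a0 \<le> d" "degree b0 \<le> d" for a0 b0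
      using quad_nonneg(2)[OF H[OF that(2,3), rule_format] that(1)] .
    ultimately show ?thesis by blast
  qed
  have dsig: "degree (\<sigma> * (t mod g)^2) \<le> 2*d" for t
  proof -
    have "\<sigma> * (t mod g)^2 = (w2 * (t mod g))^2 + (- (w1 * (t mod g)))^2" using ksq by simp
    then show ?thesis using dmul[OF dk1 dk1, of t t] dmul[OF dk2 dk2, of t t]
      by (simp add: power2_eq_square degree_add_le)
  qed
  have Lsig: "L (\<sigma> * t^2) = L (\<sigma> * (t mod g)^2)" for t
  proof (rule L_modg)
    have e: "\<sigma> * (g*q + r)^2 = \<sigma> * r^2 + g * (\<sigma> * q * ((g*q + r) + r))" for q r
      by (rule polyeqI) (simp add: algebra_simps power2_eq_square)
    have "t = g * (t div g) + t mod g" by simp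
    then show "\<sigma> * t^2 = \<sigma> * (t mod g)^2 + g * (\<sigma> * (t div g) * (t + t mod g))"
      using e[of "t div g" "t mod g"] by simp
  qed
  have K: "L (\<sigma> * t^2) \<ge> 0" for t
    using quadK[of t] Lsig[of t] L_ell[OF dsig] by simp
  have Null: "L (t * X) = 0" if "L (\<sigma> * t^2) = 0" for t X
  proof -
    have z: "ell (\<sigma> * (t mod g)^2) = 0" using that Lsig L_ell[OF dsig] by simp
    define a0 where "a0 = (X * B0) mod g"
    define b0 where "b0 = - ((X * A0) mod g)"
    have Q: "\<forall>a0 b0. degree a0 \<le> d \<longrightarrow> degree b0 \<le> d \<longrightarrow> ell (a0 * (w2 * (t mod g)) + b0 * (- (w1 * (t mod g)))) = 0"
      using quadK[of t] z by blast
    have "ell (a0 * (w2 * (t mod g)) + b0 * (- (w1 * (t mod g)))) = 0"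
      by (rule Q[rule_format]) (simp_all add: a0_def b0_def dmodg)
    moreover have "L (a0 * (w2 * (t mod g)) + b0 * (- (w1 * (t mod g)))) = ell (a0 * (w2 * (t mod g)) + b0 * (- (w1 * (t mod g))))"
    proof (rule L_ell)
      have "degree (a0 * (w2 * (t mod g))) \<le> 2*d" using dmul[OF _ dk1] dmodg by (simp add: a0_def)
      moreover have "degree (b0 * (- (w1 * (t mod g)))) \<le> 2*d" using dmul[OF _ dk2] dmodg by (simp add: b0_def)
      ultimately show "degree (a0 * (w2 * (t mod g)) + b0 * (- (w1 * (t mod g)))) \<le> 2*d"
        by (meson degree_add_le)
    qed
    moreover have "L ((t mod g) * X) = L (a0 * (w2 * (t mod g)) + b0 * (- (w1 * (t mod g))))"
    proof (rule L_modg)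
      define P where "P = X * B0 div g"
      define Q where "Q = X * A0 div g"
      have e1: "X * B0 = a0 + g * P" by (simp add: a0_def P_def)
      have e2: "X * A0 = g * Q - b0" by (simp add: b0_def Q_def)
      have "(t mod g) * X = (t mod g) * X * (A0 * w1 + B0 * w2)" using bez by simp
      also have "\<dots> = (t mod g) * (w2 * (X * B0) + w1 * (X * A0))" by (simp add: algebra_simps)
      also have "\<dots> = (t mod g) * (w2 * (a0 + g * P) + w1 * (g * Q - b0))" by (simp only: e1 e2)
      also have "\<dots> = a0 * (w2 * (t mod g)) + b0 * (- (w1 * (t mod g))) + g * ((t mod g) * (w2 * P + w1 * Q))"
        by (simp add: algebra_simps)
      finally show "(t mod g) * X = a0 * (w2 * (t mod g)) + b0 * (- (w1 * (t mod g))) + g * ((t mod g) * (w2 * P + w1 * Q))" .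
    qed
    moreover have "L (t * X) = L ((t mod g) * X)"
    proof (rule L_modg[where R="(t div g) * X"])
      have e: "t * X = (t mod g + g * (t div g)) * X" by (simp only: mod_mult_div_eq)
      show "t * X = t mod g * X + g * (t div g * X)" by (subst e) (simp only: distrib_right mult.assoc)
    qed
    ultimately show ?thesis by simp
  qed
  define N where "N = {t. \<forall>X. L (t * X) = 0}"
  have "\<exists>gt\<in>N. gt \<noteq> 0 \<and> (\<forall>a\<in>N. gt dvd a)"
  proof (rule ideal_min_gen[of g])
    show "g \<in> N" unfolding N_def using L_g by simp
    show "a - b \<in> N" if "a \<in> N" "b \<in> N" for a b
      using that unfolding N_def by (simp add: algebra_simps L_diff)
    show "a * c \<in> N" if "a \<in> N" for a c
      using that unfolding N_def by (simp add: mult.assoc)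
  qed (rule g(2))
  then obtain gt where gt: "gt \<in> N" "gt \<noteq> 0" "\<And>a. a \<in> N \<Longrightarrow> gt dvd a" by blast
  have L_gt: "L P = 0" if "gt dvd P" for P using that gt(1) unfolding N_def by (auto simp: dvd_def)
  have Pos: "L (\<sigma> * t^2) > 0" if "t \<noteq> 0" "degree t < degree gt" for t
  proof -
    have "t \<notin> N"
    proof
      assume "t \<in> N"
      then have "gt dvd t" by (rule gt(3))
      then have "degree gt \<le> degree t" using that(1) by (rule dvd_imp_degree_le)
      then show False using that(2) by simp
    qed
    then have "L (\<sigma> * t^2) \<noteq> 0" using Null unfolding N_def by blast
    then show ?thesis using K[of t] by simp
  qed
  have SQF: "\<not> [:-a,1:]^2 dvd gt" for a
  proof
    assume "[:-a,1:]^2 dvd gt"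
    then obtain E where E: "gt = [:-a,1:]^2 * E" by (auto simp: dvd_def)
    have Enz: "E \<noteq> 0" using gt(2) E by auto
    have dgt: "degree gt = 2 + degree E" unfolding E using Enz by (subst degree_mult_eq) (auto simp: degree_power_eq)
    have "degree ([:-a,1:] * E) = 1 + degree E" using Enz by (subst degree_mult_eq) auto
    then have "L (\<sigma> * ([:-a,1:] * E)^2) > 0" using Enz dgt by (intro Pos) auto
    moreover have "\<sigma> * ([:-a,1:] * E)^2 = gt * (\<sigma> * E)" unfolding E by (rule polyeqI) (simp add: power2_eq_square algebra_simps)
    ultimately show False using L_gt[of "gt * (\<sigma> * E)"] by (metis dvd_triv_left less_irrefl)
  qed
  have NQ: "\<not> [:\<gamma>,\<beta>,1:] dvd gt" if lt: "\<beta>^2 < 4*\<gamma>" for \<beta> \<gamma>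
  proof
    assume "[:\<gamma>,\<beta>,1:] dvd gt"
    then obtain F where F: "gt = [:\<gamma>,\<beta>,1:] * F" by (auto simp: dvd_def)
    have Fnz: "F \<noteq> 0" using gt(2) F by auto
    have dgt: "degree gt = 2 + degree F" unfolding F using Fnz by (subst degree_mult_eq) auto
    have p1: "L (\<sigma> * F^2) > 0" using Fnz dgt by (intro Pos) auto
    have "degree (F * [:\<beta>,2:]) = degree F + 1" using Fnz by (subst degree_mult_eq) auto
    then have p2: "L (\<sigma> * (F * [:\<beta>,2:])^2) > 0" using Fnz dgt by (intro Pos) auto
    have "\<sigma> * (F * [:\<beta>,2:])^2 = smult (\<beta>^2 - 4*\<gamma>) (\<sigma> * F^2) + gt * smult 4 (\<sigma> * F)"
      unfolding F by (rule polyeqI) (simp add: algebra_simps power2_eq_square)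
    then have "L (\<sigma> * (F * [:\<beta>,2:])^2) = (\<beta>^2 - 4*\<gamma>) * L (\<sigma> * F^2)"
      using L_add L_smult L_gt[of "gt * (\<sigma> * F)"] by simp
    moreover have "(\<beta>^2 - 4*\<gamma>) * L (\<sigma> * F^2) < 0" using lt p1 by (simp add: mult_neg_pos)
    ultimately show False using p2 by simp
  qed
  have ROOTS: "\<exists>a. poly F a = 0" if "F dvd gt" "degree F > 0" for F
    using real_root_or_quad[OF that(2)] NQ that(1) dvd_trans by blast
  have sigpos: "poly \<sigma> a > 0" for a
  proof -
    have "poly (A0 * w1 + B0 * w2) a = 1" using bez by simp
    then have "poly w1 a \<noteq> 0 \<or> poly w2 a \<noteq> 0" by auto
    then show ?thesis by (auto simp: \<sigma>_def add_pos_nonneg add_nonneg_pos)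
  qed
  obtain t where t: "\<forall>a\<in>{a. poly gt a = 0}. poly t a = sqrt (poly p a / poly \<sigma> a)"
    using interp_exists[OF poly_roots_finite[OF gt(2)], of "\<lambda>a. sqrt (poly p a / poly \<sigma> a)"] by blast
  have "gt dvd (p - \<sigma> * t^2)"
  proof (rule div_by_roots[OF gt(2) SQF ROOTS])
    fix a assume "poly gt a = 0"
    then have "poly t a = sqrt (poly p a / poly \<sigma> a)" using t by simp
    then have "(poly t a)^2 = poly p a / poly \<sigma> a" using pn[of a] sigpos[of a] by simp
    then show "poly (p - \<sigma> * t^2) a = 0" using sigpos[of a] by (simp add: field_simps)
  qed
  then have "L (p - \<sigma> * t^2) = 0" by (rule L_gt)
  then have "L p = L (\<sigma> * t^2)" using L_diff by simp
  then have "L p \<ge> 0" using K by simp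
  then show ?thesis using L_ell[OF dp] by simp
qed


definition rv :: "nat \<Rightarrow> real poly \<Rightarrow> real poly" where
  "rv n f = monom 1 (n - degree f) * reflect_poly f"

lemma coeff_rv: "degree f \<le> n \<Longrightarrow> coeff (rv n f) k = (if k \<le> n then coeff f (n - k) else 0)"
  unfolding rv_def coeff_monom_mult coeff_reflect_poly
  by (auto simp: coeff_eq_0)

lemma degree_rv: "degree f \<le> n \<Longrightarrow> degree (rv n f) \<le> n"
  by (rule degree_le) (auto simp: coeff_rv)

lemma rv_add: "degree f \<le> n \<Longrightarrow> degree g \<le> n \<Longrightarrow> rv n (f + g) = rv n f + rv n g"
  by (rule poly_eqI) (simp add: coeff_rv degree_add_le)

lemma rv_smult: "degree f \<le> n \<Longrightarrow> rv n (smult c f) = smult c (rv n f)"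
  by (rule poly_eqI) (simp add: coeff_rv order.trans[OF degree_smult_le])

lemma rv_rv: "degree f \<le> n \<Longrightarrow> rv n (rv n f) = f"
  by (rule poly_eqI) (auto simp: coeff_rv degree_rv coeff_eq_0)

lemma rv_mult: "degree f \<le> m \<Longrightarrow> degree g \<le> n \<Longrightarrow> rv (m + n) (f * g) = rv m f * rv n g"
proof (cases "f = 0 \<or> g = 0")
  case True then show ?thesis by (auto simp: rv_def)
next
  case False
  assume a: "degree f \<le> m" "degree g \<le> n"
  have "degree (f * g) = degree f + degree g" using False by (simp add: degree_mult_eq)
  then have "rv (m + n) (f * g) = monom 1 ((m - degree f) + (n - degree g)) * (reflect_poly f * reflect_poly g)"
    using a by (simp add: rv_def reflect_poly_mult)
  also have "\<dots> = rv m f * rv n g"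
    using mult_monom[of "1::real" "m - degree f" 1 "n - degree g"] by (simp add: rv_def algebra_simps)
  finally show ?thesis .
qed

lemma poly_rv: "degree f \<le> n \<Longrightarrow> x \<noteq> 0 \<Longrightarrow> poly (rv n f) x = x ^ n * poly f (inverse x)"
  by (simp add: rv_def poly_monom poly_reflect_poly_nz power_add[symmetric])

lemma poly_rv0: "degree f \<le> n \<Longrightarrow> poly (rv n f) 0 = coeff f n"
  by (simp add: poly_0_coeff_0 coeff_rv)

lemma nonneg_coeff:
  fixes f :: "real poly"
  assumes "\<And>x. poly f x \<ge> 0" "degree f \<le> n"
  shows "coeff f n \<ge> 0"
proof (cases "degree f = n")
  case False then show ?thesis using assms(2) by (simp add: coeff_eq_0)
next
  case True
  show ?thesis
  proof (rule ccontr)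
    assume "\<not> coeff f n \<ge> 0"
    then have lc: "lead_coeff (- f) > 0" using True by simp
    show False
    proof (cases "degree f = 0")
      case True
      then show False using lc assms(1)[of 0] by (simp add: poly_0_coeff_0)
    next
      case False
      obtain N where "\<forall>x\<ge>N. poly (- f) x \<ge> lead_coeff (- f)" using poly_pinfty_gt_lc[OF lc] by blast
      then have "poly (- f) N > 0" using lc by force
      then show False using assms(1)[of N] by simp
    qed
  qed
qed

definition sh :: "real \<Rightarrow> real poly \<Rightarrow> real poly" where
  "sh b f = pcompose f [:b,1:]"

lemma degree_sh [simp]: "degree (sh b f) = degree f"
  by (simp add: sh_def degree_pcompose)

lemma sh_sh: "sh (-b) (sh b f) = f"
proof -
  have "pcompose [:b,1:] [:-b,1:] = [:0,1:]" by (simp add: pcompose_pCons)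
  then show ?thesis by (simp add: sh_def pcompose_assoc[symmetric])
qed

lemma sh_sh': "sh b (sh (-b) f) = f"
  using sh_sh[of "-b" f] by simp

lemma sh_add: "sh b (f + g) = sh b f + sh b g" by (simp add: sh_def pcompose_add)
lemma sh_smult: "sh b (smult c f) = smult c (sh b f)" by (simp add: sh_def pcompose_smult)
lemma sh_mult: "sh b (f * g) = sh b f * sh b g" by (simp add: sh_def pcompose_mult)
lemma poly_sh: "poly (sh b f) x = poly f (b + x)" by (simp add: sh_def poly_pcompose)

definition TT where "TT b n h = rv n (sh b h)"
definition TI where "TI b n P = sh (-b) (rv n P)"

lemma TI_TT: "degree h \<le> n \<Longrightarrow> TI b n (TT b n h) = h"
  by (simp add: TT_def TI_def rv_rv sh_sh)
lemma TT_TI: "degree P \<le> n \<Longrightarrow> TT b n (TI b n P) = P"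
  by (simp add: TT_def TI_def rv_rv sh_sh' degree_rv)
lemma degree_TT: "degree h \<le> n \<Longrightarrow> degree (TT b n h) \<le> n"
  by (simp add: TT_def degree_rv)
lemma degree_TI: "degree P \<le> n \<Longrightarrow> degree (TI b n P) \<le> n"
  by (simp add: TI_def degree_rv)
lemma TT_add: "degree f \<le> n \<Longrightarrow> degree g \<le> n \<Longrightarrow> TT b n (f + g) = TT b n f + TT b n g"
  by (simp add: TT_def sh_add rv_add)
lemma TI_add: "degree f \<le> n \<Longrightarrow> degree g \<le> n \<Longrightarrow> TI b n (f + g) = TI b n f + TI b n g"
  by (simp add: TI_def sh_add rv_add)
lemma TI_smult: "degree f \<le> n \<Longrightarrow> TI b n (smult c f) = smult c (TI b n f)"
  by (simp add: TI_def sh_smult rv_smult)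
lemma TT_mult: "degree f \<le> m \<Longrightarrow> degree g \<le> n \<Longrightarrow> TT b (m + n) (f * g) = TT b m f * TT b n g"
  by (simp add: TT_def sh_mult rv_mult)


lemma alg_general:
  fixes d :: nat and ell C :: "real poly \<Rightarrow> real" and u1 u2 p :: "real poly"
  assumes add: "\<And>a b. degree a \<le> 2*d \<Longrightarrow> degree b \<le> 2*d \<Longrightarrow> ell (a + b) = ell a + ell b"
    and smul: "\<And>c a. degree a \<le> 2*d \<Longrightarrow> ell (smult c a) = c * ell a"
    and du1: "degree u1 \<le> d" and u1nz: "u1 \<noteq> 0" and du2: "degree u2 \<le> d"
    and F1: "\<And>X. degree X \<le> d \<Longrightarrow> ell (u1 * X) = 0"
    and F2: "\<And>X. degree X \<le> d \<Longrightarrow> ell (u2 * X) = 0"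
    and S: "\<And>a b. degree a \<le> d \<Longrightarrow> degree b \<le> d \<Longrightarrow> C (u1 * a + u2 * b) + ell (a^2 + b^2) \<ge> 0"
    and pn: "\<And>x. poly p x \<ge> 0" and dp: "degree p \<le> 2*d"
  shows "ell p \<ge> 0"
proof -
  obtain b where b: "poly u1 b \<noteq> 0" using u1nz poly_all_0_iff_0 by blast
  define ell' where "ell' P = ell (TI b (2*d) P)" for P
  define C' where "C' P = C (TI b (2*d) P)" for P
  define v1 where "v1 = TT b d u1"
  define v2 where "v2 = TT b d u2"
  define p' where "p' = TT b (2*d) p"
  have dd: "d + d = 2*d" by simp
  have TTm: "TT b (2*d) (f * g) = TT b d f * TT b d g" if "degree f \<le> d" "degree g \<le> d" for f g
    using TT_mult[OF that, of b] dd by simp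
  have ell'TT: "ell' (TT b (2*d) Y) = ell Y" if "degree Y \<le> 2*d" for Y
    using that by (simp add: ell'_def TI_TT)
  have dmul: "degree (a * c) \<le> 2*d" if "degree a \<le> d" "degree c \<le> d" for a c :: "real poly"
    using degree_mult_le[of a c] that by linarith
  have "ell' p' \<ge> 0"
  proof (rule alg_core[where C=C' and ?u1.0=v1 and ?u2.0=v2])
    show "ell' (a + c) = ell' a + ell' c" if "degree a \<le> 2*d" "degree c \<le> 2*d" for a c
      using that by (simp add: ell'_def TI_add add degree_TI)
    show "ell' (smult c a) = c * ell' a" if "degree a \<le> 2*d" for c a
      using that by (simp add: ell'_def TI_smult smul degree_TI)
    show dv1: "degree v1 = d"
    proof (rule antisym)
      show "degree v1 \<le> d" unfolding v1_def by (rule degree_TT[OF du1])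
      have "coeff v1 d = poly u1 b" using du1 by (simp add: v1_def TT_def coeff_rv poly_0_coeff_0[symmetric] poly_sh)
      then show "d \<le> degree v1" using b by (intro le_degree) simp
    qed
    show "v1 \<noteq> 0"
    proof
      assume "v1 = 0"
      then have "coeff v1 d = 0" by simp
      moreover have "coeff v1 d = poly u1 b" using du1 by (simp add: v1_def TT_def coeff_rv poly_0_coeff_0[symmetric] poly_sh)
      ultimately show False using b by simp
    qed
    show "degree v2 \<le> d" unfolding v2_def by (rule degree_TT[OF du2])
    show "ell' (v1 * X) = 0" if "degree X \<le> d" for X
    proof -
      have "v1 * X = TT b (2*d) (u1 * TI b d X)"
        using TTm[OF du1 degree_TI[OF that]] TT_TI[OF that] by (simp add: v1_def)
      then show ?thesis using ell'TT dmul[OF du1 degree_TI[OF that]] F1[OF degree_TI[OF that]] by simp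
    qed
    show "ell' (v2 * X) = 0" if "degree X \<le> d" for X
    proof -
      have "v2 * X = TT b (2*d) (u2 * TI b d X)"
        using TTm[OF du2 degree_TI[OF that]] TT_TI[OF that] by (simp add: v2_def)
      then show ?thesis using ell'TT dmul[OF du2 degree_TI[OF that]] F2[OF degree_TI[OF that]] by simp
    qed
    show "C' (v1 * a + v2 * c) + ell' (a^2 + c^2) \<ge> 0" if "degree a \<le> d" "degree c \<le> d" for a c
    proof -
      define a0 where "a0 = TI b d a"
      define c0 where "c0 = TI b d c"
      have da: "degree a0 \<le> d" "degree c0 \<le> d" using that by (simp_all add: a0_def c0_def degree_TI)
      have ea: "a = TT b d a0" "c = TT b d c0" using that by (simp_all add: a0_def c0_def TT_TI)
      have e1: "v1 * a + v2 * c = TT b (2*d) (u1 * a0 + u2 * c0)"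
        using TTm[OF du1 da(1)] TTm[OF du2 da(2)] ea TT_add[OF dmul[OF du1 da(1)] dmul[OF du2 da(2)]]
        by (simp add: v1_def v2_def)
      have e2: "a^2 + c^2 = TT b (2*d) (a0^2 + c0^2)"
        using TTm[OF da(1) da(1)] TTm[OF da(2) da(2)] ea TT_add[OF dmul[OF da(1) da(1)] dmul[OF da(2) da(2)]]
        by (simp add: power2_eq_square)
      have d1: "degree (u1 * a0 + u2 * c0) \<le> 2*d"
        using dmul[OF du1 da(1)] dmul[OF du2 da(2)] by (meson degree_add_le)
      have d2: "degree (a0^2 + c0^2) \<le> 2*d"
        using dmul[OF da(1) da(1)] dmul[OF da(2) da(2)] by (simp add: power2_eq_square degree_add_le)
      have "C' (v1 * a + v2 * c) = C (u1 * a0 + u2 * c0)" unfolding e1 C'_def using TI_TT[OF d1] by simp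
      moreover have "ell' (a^2 + c^2) = ell (a0^2 + c0^2)" unfolding e2 using ell'TT[OF d2] .
      ultimately show ?thesis using S[OF da] by simp
    qed
    show "poly p' x \<ge> 0" for x
    proof (cases "x = 0")
      case True
      have "poly p' x = coeff (sh b p) (2*d)" using True dp by (simp add: p'_def TT_def poly_rv0)
      also have "\<dots> \<ge> 0" by (rule nonneg_coeff) (use pn dp in \<open>auto simp: poly_sh\<close>)
      finally show ?thesis .
    next
      case False
      have "poly p' x = x ^ (2*d) * poly (sh b p) (inverse x)" using False dp by (simp add: p'_def TT_def poly_rv)
      also have "\<dots> = (x^d)^2 * poly p (b + inverse x)" by (simp add: poly_sh power_mult[symmetric] mult.commute)
      also have "\<dots> \<ge> 0" using pn by simp
      finally show ?thesis .
    qed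
    show "degree p' \<le> 2*d" unfolding p'_def by (rule degree_TT[OF dp])
  qed
  then show ?thesis unfolding p'_def using ell'TT[OF dp] by simp
qed


lemma deg_sum_le: "(\<And>i. i \<in> I \<Longrightarrow> degree (f i) \<le> n) \<Longrightarrow> degree (sum f I) \<le> (n::nat)"
  for f :: "'a \<Rightarrow> real poly"
  by (induct I rule: infinite_finite_induct) (auto intro: order.trans[OF degree_add_le])

lemma deg_sum_list_le: "(\<And>h. h \<in> set hs \<Longrightarrow> degree (f h) \<le> n) \<Longrightarrow> degree (sum_list (map f hs)) \<le> (n::nat)"
  for f :: "'a \<Rightarrow> real poly"
  by (induct hs) (auto intro: order.trans[OF degree_add_le])

context
  fixes n :: nat and ip :: "real poly \<Rightarrow> real poly \<Rightarrow> real"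
  assumes IP: "is_inner_product_on n ip"
begin

lemma ip_sym: "degree a \<le> n \<Longrightarrow> degree b \<le> n \<Longrightarrow> ip a b = ip b a"
  using IP unfolding is_inner_product_on_def by blast
lemma ip_addL: "degree a \<le> n \<Longrightarrow> degree b \<le> n \<Longrightarrow> degree c \<le> n \<Longrightarrow> ip (a + b) c = ip a c + ip b c"
  using IP unfolding is_inner_product_on_def by blast
lemma ip_smultL: "degree a \<le> n \<Longrightarrow> degree b \<le> n \<Longrightarrow> ip (smult t a) b = t * ip a b"
  using IP unfolding is_inner_product_on_def by blast
lemma ip_pos: "degree a \<le> n \<Longrightarrow> a \<noteq> 0 \<Longrightarrow> ip a a > 0"
  using IP unfolding is_inner_product_on_def by blast
lemma ip_addR: "degree a \<le> n \<Longrightarrow> degree b \<le> n \<Longrightarrow> degree c \<le> n \<Longrightarrow> ip c (a + b) = ip c a + ip c b"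
proof -
  assume a: "degree a \<le> n" "degree b \<le> n" "degree c \<le> n"
  have dab: "degree (a + b) \<le> n" using a by (intro degree_add_le) auto
  have "ip c (a + b) = ip (a + b) c" using ip_sym[OF a(3) dab] .
  also have "\<dots> = ip a c + ip b c" by (rule ip_addL[OF a])
  also have "\<dots> = ip c a + ip c b" using ip_sym[OF a(1) a(3)] ip_sym[OF a(2) a(3)] by simp
  finally show ?thesis .
qed
lemma ip_smultR: "degree a \<le> n \<Longrightarrow> degree b \<le> n \<Longrightarrow> ip b (smult t a) = t * ip b a"
proof -
  assume a: "degree a \<le> n" "degree b \<le> n"
  have da: "degree (smult t a) \<le> n" using a by (intro order.trans[OF degree_smult_le]) auto
  have "ip b (smult t a) = ip (smult t a) b" using ip_sym[OF a(2) da] .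
  also have "\<dots> = t * ip a b" by (rule ip_smultL[OF a])
  also have "\<dots> = t * ip b a" using ip_sym[OF a(1) a(2)] by simp
  finally show ?thesis .
qed
lemma ip_zeroL: "degree b \<le> n \<Longrightarrow> ip 0 b = 0"
  using ip_smultL[of 0 b 0] by simp
lemma ip_nonneg: "degree a \<le> n \<Longrightarrow> ip a a \<ge> 0"
  using ip_pos[of a] ip_zeroL[of 0] by (cases "a = 0") auto

lemma ip_sum_list: "degree c \<le> n \<Longrightarrow> (\<And>h. h \<in> set hs \<Longrightarrow> degree (f h) \<le> n) \<Longrightarrow>
    ip c (sum_list (map f hs)) = (\<Sum>h\<leftarrow>hs. ip c (f h))"
proof (induct hs)
  case Nil then show ?case using ip_zeroL[of c] ip_sym[of 0 c] by simp
next
  case (Cons a hs)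
  have "degree (sum_list (map f hs)) \<le> n" using Cons(3) by (intro deg_sum_list_le) auto
  then show ?case using Cons by (simp add: ip_addR)
qed

lemma ip_sum: "degree c \<le> n \<Longrightarrow> (\<And>i. i \<in> I \<Longrightarrow> degree (f i) \<le> n) \<Longrightarrow>
    ip c (sum f I) = (\<Sum>i\<in>I. ip c (f i))"
proof (induct I rule: infinite_finite_induct)
  case (infinite A) then show ?case using ip_zeroL[of c] ip_sym[of 0 c] by simp
next
  case empty then show ?case using ip_zeroL[of c] ip_sym[of 0 c] by simp
next
  case (insert x F)
  have "degree (sum f F) \<le> n" using insert by (intro deg_sum_le) auto
  then show ?case using insert by (simp add: ip_addR)
qed

lemma ip_expand:
  assumes "degree q \<le> n" "degree W \<le> n" "degree S \<le> n"
  shows "ip (q + smult t W + smult (t^2) S) (q + smult t W + smult (t^2) S)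
    = ip q q + t * (2 * ip q W) + t^2 * (ip W W + 2 * ip q S) + t^3 * (2 * ip W S) + t^4 * ip S S"
proof -
  let ?X = "q + smult t W + smult (t^2) S"
  have dX: "degree ?X \<le> n" using assms
    by (auto intro!: degree_add_le order.trans[OF degree_smult_le])
  have d1: "degree (smult t W) \<le> n" "degree (smult (t^2) S) \<le> n" "degree (q + smult t W) \<le> n"
    using assms by (auto intro!: degree_add_le order.trans[OF degree_smult_le])
  have "ip ?X ?X = ip q ?X + t * ip W ?X + t^2 * ip S ?X"
    using assms d1 dX by (simp add: ip_addL ip_smultL)
  moreover have "ip a ?X = ip a q + t * ip a W + t^2 * ip a S" if "degree a \<le> n" for a
    using assms d1 dX that by (simp add: ip_addR ip_smultR)
  ultimately have "ip ?X ?X = (ip q q + t * ip q W + t^2 * ip q S) + t * (ip W q + t * ip W W + t^2 * ip W S)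
      + t^2 * (ip S q + t * ip S W + t^2 * ip S S)" using assms by simp
  moreover have "ip W q = ip q W" "ip S q = ip q S" "ip S W = ip W S" using assms ip_sym by auto
  ultimately show ?thesis by (simp add: algebra_simps power2_eq_square power3_eq_cube power4_eq_xxxx)
qed

end

lemma deriv_quartic:
  fixes A B C D E :: real
  shows "((\<lambda>t. A + t * B + t^2 * C + t^3 * D + t^4 * E) has_real_derivative B) (at 0)"
    and "deriv (deriv (\<lambda>t. A + t * B + t^2 * C + t^3 * D + t^4 * E)) 0 = 2 * C"
proof -
  have D1: "((\<lambda>t. A + t * B + t^2 * C + t^3 * D + t^4 * E) has_real_derivative (B + 2 * t * C + 3 * t^2 * D + 4 * t^3 * E)) (at t)" for t
    by (auto intro!: derivative_eq_intros simp: algebra_simps power2_eq_square power3_eq_cube)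
  then show "((\<lambda>t. A + t * B + t^2 * C + t^3 * D + t^4 * E) has_real_derivative B) (at 0)" using D1[of 0] by simp
  have "deriv (\<lambda>t. A + t * B + t^2 * C + t^3 * D + t^4 * E) = (\<lambda>t. B + 2 * t * C + 3 * t^2 * D + 4 * t^3 * E)"
    using D1 DERIV_imp_deriv by blast
  moreover have "((\<lambda>t. B + 2 * t * C + 3 * t^2 * D + 4 * t^3 * E) has_real_derivative (2 * C)) (at 0)"
    by (auto intro!: derivative_eq_intros)
  ultimately show "deriv (deriv (\<lambda>t. A + t * B + t^2 * C + t^3 * D + t^4 * E)) 0 = 2 * C"
    by (simp add: DERIV_imp_deriv)
qed


theorem theorem1p1:
  fixes d r :: nat and ip :: "real poly \<Rightarrow> real poly \<Rightarrow> real"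
    and p :: "real poly" and u :: "nat \<Rightarrow> real poly"
  assumes "r \<ge> 2"
    and "is_inner_product_on (2 * d) ip"
    and "degree p \<le> 2 * d"
    and "\<forall>x. poly p x \<ge> 0"
    and "u \<in> poly_tuples d r"
    and "grad_zero d r (fp ip r p) u"
    and "hess_psd d r (fp ip r p) u"
  shows "fp ip r p u = 0"
proof -
  note IP = assms(2)
  have du: "degree (u i) \<le> d" if "i < r" for i using assms(5) that by (simp add: poly_tuples_def)
  have dmul: "degree (a * b) \<le> 2*d" if "degree a \<le> d" "degree b \<le> d" for a b :: "real poly"
    using degree_mult_le[of a b] that by linarith
  define q where "q = (\<Sum>i<r. (u i)^2) - p"
  have dsu: "degree (\<Sum>i<r. (u i)^2) \<le> 2*d"
    by (rule deg_sum_le) (use dmul du in \<open>auto simp: power2_eq_square\<close>)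
  have dq: "degree q \<le> 2*d" unfolding q_def using dsu assms(3) by (meson degree_diff_le)
  have FS: "ip q (\<Sum>i<r. u i * v i) = 0 \<and> 2 * ip (\<Sum>i<r. u i * v i) (\<Sum>i<r. u i * v i) + ip q (\<Sum>i<r. (v i)^2) \<ge> 0"
    if v: "v \<in> poly_tuples d r" for v
  proof -
    have dv: "degree (v i) \<le> d" if "i < r" for i using v that by (simp add: poly_tuples_def)
    define w where "w = (\<Sum>i<r. u i * v i)"
    define S where "S = (\<Sum>i<r. (v i)^2)"
    have dw: "degree w \<le> 2*d" unfolding w_def by (rule deg_sum_le) (use dmul du dv in auto)
    have dS: "degree S \<le> 2*d" unfolding S_def by (rule deg_sum_le) (use dmul dv in \<open>auto simp: power2_eq_square\<close>)
    have dW: "degree (smult 2 w) \<le> 2*d" using dw by (simp add: order.trans[OF degree_smult_le])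
    define A where "A = ip q q"
    define B where "B = 2 * ip q (smult 2 w)"
    define Cc where "Cc = ip (smult 2 w) (smult 2 w) + 2 * ip q S"
    define D where "D = 2 * ip (smult 2 w) S"
    define E where "E = ip S S"
    have eq: "line_restr (fp ip r p) u v = (\<lambda>t. A + t * B + t^2 * Cc + t^3 * D + t^4 * E)"
    proof
      fix t
      have pe: "(\<Sum>i<r. (u i + smult t (v i))^2) - p = q + smult t (smult 2 w) + smult (t^2) S"
        by (rule polyeqI) (simp add: q_def w_def S_def poly_sum sum.distrib sum_distrib_left algebra_simps power2_eq_square)
      show "line_restr (fp ip r p) u v t = A + t * B + t^2 * Cc + t^3 * D + t^4 * E"
        unfolding line_restr_def fp_def Let_def pe
        using ip_expand[OF IP dq dW dS, of t] by (simp add: A_def B_def Cc_def D_def E_def)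
    qed
    have "(line_restr (fp ip r p) u v has_real_derivative 0) (at 0)"
      using assms(6) v by (simp add: grad_zero_def)
    then have "B = 0" using deriv_quartic(1)[of A B Cc D E] eq DERIV_unique by metis
    moreover have "2 * Cc \<ge> 0"
    proof -
      have "deriv (deriv (line_restr (fp ip r p) u v)) 0 \<ge> 0" using assms(7) v by (simp add: hess_psd_def)
      then show ?thesis unfolding eq deriv_quartic(2) .
    qed
    moreover have "ip q (smult 2 w) = 2 * ip q w" using ip_smultR[OF IP dw dq] .
    moreover have "ip (smult 2 w) (smult 2 w) = 4 * ip w w"
      using ip_smultR[OF IP dw dW] ip_smultL[OF IP dw dw] by simp
    ultimately show ?thesis by (simp add: B_def Cc_def w_def S_def)
  qed
  define ell where "ell P = ip q P" for P
  define Cf where "Cf P = 2 * ip P P" for P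
  have ell_add: "ell (a + b) = ell a + ell b" if "degree a \<le> 2*d" "degree b \<le> 2*d" for a b
    unfolding ell_def using ip_addR[OF IP that dq] .
  have ell_smult: "ell (smult c a) = c * ell a" if "degree a \<le> 2*d" for c a
    unfolding ell_def using ip_smultR[OF IP that dq] .
  have F: "ell (u j * X) = 0" if "j < r" "degree X \<le> d" for j X
  proof -
    define v where "v i = (if i = j then X else 0)" for i
    have "v \<in> poly_tuples d r" using that by (simp add: poly_tuples_def v_def)
    moreover have "(\<Sum>i<r. u i * v i) = u j * X"
    proof -
      have "(\<Sum>i<r. u i * v i) = (\<Sum>i<r. if i = j then u j * X else 0)" by (rule sum.cong) (auto simp: v_def)
      then show ?thesis using that by simp
    qed
    ultimately show ?thesis using FS[of v] by (simp add: ell_def)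
  qed
  have S2: "Cf (u i0 * a + u i1 * b) + ell (a^2 + b^2) \<ge> 0"
    if "i0 < r" "i1 < r" "i0 \<noteq> i1" "degree a \<le> d" "degree b \<le> d" for i0 i1 a b
  proof -
    define v where "v i = (if i = i0 then a else if i = i1 then b else 0)" for i
    have "v \<in> poly_tuples d r" using that by (simp add: poly_tuples_def v_def)
    moreover have "(\<Sum>i<r. u i * v i) = u i0 * a + u i1 * b"
    proof -
      have "(\<Sum>i<r. u i * v i) = (\<Sum>i<r. (if i = i0 then u i0 * a else 0) + (if i = i1 then u i1 * b else 0))"
        by (rule sum.cong) (use that in \<open>auto simp: v_def\<close>)
      then show ?thesis using that by (simp add: sum.distrib)
    qed
    moreover have "(\<Sum>i<r. (v i)^2) = a^2 + b^2"
    proof -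
      have "(\<Sum>i<r. (v i)^2) = (\<Sum>i<r. (if i = i0 then a^2 else 0) + (if i = i1 then b^2 else 0))"
        by (rule sum.cong) (use that in \<open>auto simp: v_def\<close>)
      then show ?thesis using that by (simp add: sum.distrib)
    qed
    ultimately show ?thesis using FS[of v] by (simp add: ell_def Cf_def)
  qed
  have ellp: "ell p \<ge> 0"
  proof (cases "\<forall>i<r. u i = 0")
    case True
    obtain hs where hs: "\<forall>h\<in>set hs. degree h \<le> d" "p = (\<Sum>h\<leftarrow>hs. h^2)"
      using sos_univ[of p d] assms(3,4) by blast
    have "ell (h^2) \<ge> 0" if "h \<in> set hs" for h
    proof -
      have "Cf (u 0 * h + u 1 * 0) + ell (h^2 + 0^2) \<ge> 0" using S2[of 0 1 h 0] that hs(1) assms(1) by simp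
      moreover have "u 0 = 0" using True assms(1) by simp
      moreover have "Cf 0 = 0" unfolding Cf_def using ip_zeroL[OF IP, of 0] by simp
      ultimately show ?thesis by simp
    qed
    moreover have "ell p = (\<Sum>h\<leftarrow>hs. ell (h^2))"
      unfolding hs(2) ell_def by (rule ip_sum_list[OF IP dq]) (use hs(1) dmul in \<open>auto simp: power2_eq_square\<close>)
    ultimately show ?thesis by (auto intro!: sum_list_nonneg)
  next
    case False
    then obtain j where j: "j < r" "u j \<noteq> 0" by blast
    define i1 :: nat where "i1 = (if j = 0 then 1 else 0)"
    have i1: "i1 < r" "i1 \<noteq> j" using assms(1) j by (auto simp: i1_def)
    show ?thesis
    proof (rule alg_general[where C=Cf and ?u1.0="u j" and ?u2.0="u i1"])
      show "ell (a + b) = ell a + ell b" if "degree a \<le> 2*d" "degree b \<le> 2*d" for a b using ell_add that .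
      show "ell (smult c a) = c * ell a" if "degree a \<le> 2*d" for c a using ell_smult that .
      show "degree (u j) \<le> d" "u j \<noteq> 0" "degree (u i1) \<le> d" using du j i1 by auto
      show "ell (u j * X) = 0" if "degree X \<le> d" for X using F j that by simp
      show "ell (u i1 * X) = 0" if "degree X \<le> d" for X using F i1 that by simp
      show "Cf (u j * a + u i1 * b) + ell (a^2 + b^2) \<ge> 0" if "degree a \<le> d" "degree b \<le> d" for a b
        using S2 j i1 that by simp
      show "poly p x \<ge> 0" for x using assms(4) by simp
      show "degree p \<le> 2*d" by (rule assms(3))
    qed
  qed
  have "ell (\<Sum>i<r. (u i)^2) = (\<Sum>i<r. ell (u i * u i))"
    unfolding ell_def power2_eq_square by (rule ip_sum[OF IP dq]) (use dmul du in auto)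
  also have "\<dots> = 0" using F du by simp
  finally have e0: "ell (\<Sum>i<r. (u i)^2) = 0" .
  have "ip q q = ell ((\<Sum>i<r. (u i)^2) + smult (-1) p)" by (simp add: ell_def q_def)
  also have "\<dots> = - ell p" using ell_add[OF dsu, of "smult (-1) p"] ell_smult[OF assms(3), of "-1"] e0 assms(3)
    by (simp add: order.trans[OF degree_smult_le])
  finally have "ip q q \<le> 0" using ellp by simp
  moreover have "ip q q \<ge> 0" by (rule ip_nonneg[OF IP dq])
  ultimately have "ip q q = 0" by simp
  then show ?thesis by (simp add: fp_def q_def Let_def)
qed

end
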